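(* Let $A$ be a partially symmetric 0-dialgebra. On $A\oplus A$ define $(a,b)\dashv(c,d)=(a\dashv c-d\vdash b^\ast,\; a^\ast\dashv d+c\vdash b)$, $(a,b)\vdash(c,d)=(a\vdash c-d\dashv b^\ast,\; a^\ast\vdash d+c\dashv b)$ and $(a,b)^\ast=(a^\ast,-b)$. Then $A\oplus A$ with these operations is a partially symmetric 0-dialgebra.
   Context: A 0-dialgebra with involution is a vector space with bilinear operations $\dashv,\vdash$ satisfying $a\dashv(b\dashv c)=a\dashv(b\vdash c)$ and $(a\dashv b)\vdash c=(a\vdash b)\vdash c$, together with a linear map $\ast$ with $(a^\ast)^\ast=a$, $(a\dashv b)^\ast=b^\ast\vdash a^\ast$, $(a\vdash b)^\ast=b^\ast\dashv a^\ast$. Write $\mathrm{sym}(x)=x+x^\ast$ and $\{x,y\}=x\dashv y-y\vdash x$. Such a structure is partially symmetric if $\{\mathrm{sym}(x),y\}=0$ and $\{x,\mathrm{sym}(y)\}=0$ for all $x,y$. *)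

theory Defs
  imports Main "HOL.Vector_Spaces" "HOL-Library.Product_Plus"
begin

definition bilinear_op :: "('k::field \<Rightarrow> 'v::ab_group_add \<Rightarrow> 'v) \<Rightarrow> ('v \<Rightarrow> 'v \<Rightarrow> 'v) \<Rightarrow> bool" where
  "bilinear_op scale m \<longleftrightarrow>
     (\<forall>x. Vector_Spaces.linear scale scale (m x)) \<and>
     (\<forall>y. Vector_Spaces.linear scale scale (\<lambda>x. m x y))"

definition zero_dialg_inv ::
  "('k::field \<Rightarrow> 'v::ab_group_add \<Rightarrow> 'v) \<Rightarrow> ('v \<Rightarrow> 'v \<Rightarrow> 'v) \<Rightarrow> ('v \<Rightarrow> 'v \<Rightarrow> 'v) \<Rightarrow> ('v \<Rightarrow> 'v) \<Rightarrow> bool" where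
  "zero_dialg_inv scale L R st \<longleftrightarrow>
     Vector_Spaces.vector_space scale \<and>
     bilinear_op scale L \<and> bilinear_op scale R \<and>
     Vector_Spaces.linear scale scale st \<and>
     (\<forall>a b c. L a (L b c) = L a (R b c)) \<and>
     (\<forall>a b c. R (L a b) c = R (R a b) c) \<and>
     (\<forall>a. st (st a) = a) \<and>
     (\<forall>a b. st (L a b) = R (st b) (st a)) \<and>
     (\<forall>a b. st (R a b) = L (st b) (st a))"

definition symm :: "('v::ab_group_add \<Rightarrow> 'v) \<Rightarrow> 'v \<Rightarrow> 'v" where
  "symm st x = x + st x"

definition brk :: "('v::ab_group_add \<Rightarrow> 'v \<Rightarrow> 'v) \<Rightarrow> ('v \<Rightarrow> 'v \<Rightarrow> 'v) \<Rightarrow> 'v \<Rightarrow> 'v \<Rightarrow> 'v" where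
  "brk L R x y = L x y - R y x"

definition partially_symmetric ::
  "('k::field \<Rightarrow> 'v::ab_group_add \<Rightarrow> 'v) \<Rightarrow> ('v \<Rightarrow> 'v \<Rightarrow> 'v) \<Rightarrow> ('v \<Rightarrow> 'v \<Rightarrow> 'v) \<Rightarrow> ('v \<Rightarrow> 'v) \<Rightarrow> bool" where
  "partially_symmetric scale L R st \<longleftrightarrow>
     zero_dialg_inv scale L R st \<and>
     (\<forall>x y. brk L R (symm st x) y = 0) \<and>
     (\<forall>x y. brk L R x (symm st y) = 0)"

text \<open>The double A \<oplus> A, carried by the type 'v \<times> 'v with componentwise
  structure (HOL's standard instance of ab_group_add on pairs).\<close>

definition dbl_scale :: "('k \<Rightarrow> 'v \<Rightarrow> 'v) \<Rightarrow> 'k \<Rightarrow> 'v \<times> 'v \<Rightarrow> 'v \<times> 'v" where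
  "dbl_scale scale k p = (scale k (fst p), scale k (snd p))"

definition dbl_L :: "('v::ab_group_add \<Rightarrow> 'v \<Rightarrow> 'v) \<Rightarrow> ('v \<Rightarrow> 'v \<Rightarrow> 'v) \<Rightarrow> ('v \<Rightarrow> 'v)
     \<Rightarrow> 'v \<times> 'v \<Rightarrow> 'v \<times> 'v \<Rightarrow> 'v \<times> 'v" where
  "dbl_L L R st p q = (case p of (a, b) \<Rightarrow> case q of (c, d) \<Rightarrow>
      (L a c - R d (st b), L (st a) d + R c b))"

definition dbl_R :: "('v::ab_group_add \<Rightarrow> 'v \<Rightarrow> 'v) \<Rightarrow> ('v \<Rightarrow> 'v \<Rightarrow> 'v) \<Rightarrow> ('v \<Rightarrow> 'v)
     \<Rightarrow> 'v \<times> 'v \<Rightarrow> 'v \<times> 'v \<Rightarrow> 'v \<times> 'v" where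
  "dbl_R L R st p q = (case p of (a, b) \<Rightarrow> case q of (c, d) \<Rightarrow>
      (R a c - L d (st b), R (st a) d + L c b))"

definition dbl_st :: "('v::ab_group_add \<Rightarrow> 'v) \<Rightarrow> 'v \<times> 'v \<Rightarrow> 'v \<times> 'v" where
  "dbl_st st p = (st (fst p), - snd p)"

end

theory Submission
  imports Defs
begin

lemma addh:
  fixes f :: "'a::ab_group_add \<Rightarrow> 'b::ab_group_add"
  assumes a: "\<And>x y. f (x+y) = f x + f y"
  shows "f 0 = 0" "f (-x) = - f x" "f (x - y) = f x - f y"
proof -
  have "f 0 = f 0 + f 0" using a[of 0 0] by simp
  then show z: "f 0 = 0" by simp
  have "f x + f (-x) = 0" using a[of x "-x"] z by simp
  then show n: "f (-x) = - f x" by (metis add.commute eq_neg_iff_add_eq_0)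
  have "f y + f (-y) = 0" using a[of y "-y"] z by simp
  then have "f (-y) = - f y" by (metis add.commute eq_neg_iff_add_eq_0)
  then show "f (x - y) = f x - f y" using a[of x "-y"] by simp
qed

theorem lemma5p4:
  fixes scale :: "'k::field \<Rightarrow> 'v::ab_group_add \<Rightarrow> 'v"
    and L R :: "'v \<Rightarrow> 'v \<Rightarrow> 'v" and st :: "'v \<Rightarrow> 'v"
  assumes "partially_symmetric scale L R st"
  shows "partially_symmetric (dbl_scale scale) (dbl_L L R st) (dbl_R L R st) (dbl_st st)"
proof -
  note A = assms[unfolded partially_symmetric_def zero_dialg_inv_def bilinear_op_def linear_iff]
  have vs: "vector_space scale" using A by auto
  have La1: "\<And>x y z. L x (y+z) = L x y + L x z" using A by auto
  have La2: "\<And>x y z. L (y+z) x = L y x + L z x" using A by auto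
  have Ls1: "\<And>x c y. L x (scale c y) = scale c (L x y)" using A by auto
  have Ls2: "\<And>x c y. L (scale c y) x = scale c (L y x)" using A by auto
  have Ra1: "\<And>x y z. R x (y+z) = R x y + R x z" using A by auto
  have Ra2: "\<And>x y z. R (y+z) x = R y x + R z x" using A by auto
  have Rs1: "\<And>x c y. R x (scale c y) = scale c (R x y)" using A by auto
  have Rs2: "\<And>x c y. R (scale c y) x = scale c (R y x)" using A by auto
  have sa: "\<And>x y. st (x+y) = st x + st y" using A by auto
  have ss: "\<And>c x. st (scale c x) = scale c (st x)" using A by auto
  have a1: "\<And>a b c. L a (L b c) = L a (R b c)" using A by auto
  have a2: "\<And>a b c. R (L a b) c = R (R a b) c" using A by auto
  have i1: "\<And>a. st (st a) = a" using A by auto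
  have i2: "\<And>a b. st (L a b) = R (st b) (st a)" using A by auto
  have i3: "\<And>a b. st (R a b) = L (st b) (st a)" using A by auto
  have p1: "\<And>x y. brk L R (symm st x) y = 0" using A by auto
  have p2: "\<And>x y. brk L R x (symm st y) = 0" using A by auto
  note La = La1 La2 and Ls = Ls1 Ls2 and Ra = Ra1 Ra2 and Rs = Rs1 Rs2
  have L0: "\<And>x. L x 0 = 0" "\<And>x. L 0 x = 0"
    and Ln: "\<And>x y. L x (-y) = - L x y" "\<And>x y. L (-y) x = - L y x"
    and Ld: "\<And>x y z. L x (y-z) = L x y - L x z" "\<And>x y z. L (y-z) x = L y x - L z x"
    using addh[of "L _", OF La(1)] addh[of "\<lambda>y. L y _", OF La(2)] by auto
  have R0: "\<And>x. R x 0 = 0" "\<And>x. R 0 x = 0"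
    and Rn: "\<And>x y. R x (-y) = - R x y" "\<And>x y. R (-y) x = - R y x"
    and Rd: "\<And>x y z. R x (y-z) = R x y - R x z" "\<And>x y z. R (y-z) x = R y x - R z x"
    using addh[of "R _", OF Ra(1)] addh[of "\<lambda>y. R y _", OF Ra(2)] by auto
  have s0: "st 0 = 0" and sn: "\<And>x. st (-x) = - st x" and sd: "\<And>x y. st (x-y) = st x - st y"
    using addh[of st, OF sa] by auto
  note simps = La Ls Ra Rs sa ss L0 Ln Ld R0 Rn Rd s0 sn sd i1 i2 i3
  interpret v: vector_space scale by (rule vs)
  have vs2: "vector_space (dbl_scale scale)"
    unfolding vector_space_def dbl_scale_def
    by (auto simp: v.scale_right_distrib v.scale_left_distrib)
  have sym0: "\<And>x. st (symm st x) = symm st x" unfolding symm_def by (simp add: sa i1 add.commute)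
  have q1: "\<And>x y. L (symm st x) y = R y (symm st x)" using p1 unfolding brk_def by simp
  have q2: "\<And>x y. L x (symm st y) = R (symm st y) x" using p2 unfolding brk_def by simp
  have sd2: "symm (dbl_st st) p = (symm st (fst p), 0)" for p
    by (cases p) (simp add: symm_def dbl_st_def)
  show ?thesis
    unfolding partially_symmetric_def zero_dialg_inv_def bilinear_op_def linear_iff
  proof (intro conjI allI)
    show "vector_space (dbl_scale scale)" by (rule vs2)
  qed (auto simp: dbl_L_def dbl_R_def dbl_st_def dbl_scale_def brk_def vs2 simps a1 a2 q1 q2 sym0 algebra_simps v.scale_right_distrib v.scale_right_diff_distrib sd2 split_beta)
qed

end
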